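(* Let $r\ge 2$ be an integer and let $G$ be a finite simple connected $K_{r+1}$-free graph of order $n$ with minimum degree $\delta$. Put $c=\lceil \delta/2\rceil$. Then $$\gamma^{0}_{st}(G)\le n-\frac{r}{r-1}\left(-c+\sqrt{c^2+4\,\frac{r-1}{r}\,c\,n}\right).$$ Moreover, the bound is sharp: for every integer $r\ge 2$ there exists a connected $K_{r+1}$-free graph (in fact an $r$-partite graph of order $r^2(r-1)$) for which equality holds.
   Context: A graph is $K_p$-free if it contains no complete graph $K_p$ as a subgraph. For a vertex $v$ of a graph $G=(V,E)$, $N(v)$ is its open neighborhood, and for $f:V\to\mathbb{R}$ and $B\subseteq V$ write $f(B)=\sum_{v\in B}f(v)$; $f(V)$ is the weight of $f$. An inverse signed total dominating function (ISTDF) of $G$ is a function $f:V\to\{-1,1\}$ such that $f(N(v))\le 0$ for every $v\in V$. The inverse signed total domination number $\gamma^{0}_{st}(G)$ is the maximum weight of an ISTDF of $G$. *)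

theory Defs
  imports Complex_Main
begin

definition simple_graph :: "'a set \<Rightarrow> ('a \<Rightarrow> 'a \<Rightarrow> bool) \<Rightarrow> bool" where
  "simple_graph V E \<longleftrightarrow> finite V \<and> (\<forall>u v. E u v \<longrightarrow> u \<in> V \<and> v \<in> V)
     \<and> (\<forall>u v. E u v \<longrightarrow> E v u) \<and> (\<forall>v. \<not> E v v)"

definition nbhd :: "'a set \<Rightarrow> ('a \<Rightarrow> 'a \<Rightarrow> bool) \<Rightarrow> 'a \<Rightarrow> 'a set" where
  "nbhd V E v = {u \<in> V. E v u}"

definition connected_graph :: "'a set \<Rightarrow> ('a \<Rightarrow> 'a \<Rightarrow> bool) \<Rightarrow> bool" where
  "connected_graph V E \<longleftrightarrow> V \<noteq> {} \<and> (\<forall>u\<in>V. \<forall>v\<in>V. E\<^sup>*\<^sup>* u v)"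

definition clique_free :: "nat \<Rightarrow> 'a set \<Rightarrow> ('a \<Rightarrow> 'a \<Rightarrow> bool) \<Rightarrow> bool" where
  "clique_free p V E \<longleftrightarrow>
     \<not> (\<exists>S. S \<subseteq> V \<and> card S = p \<and> (\<forall>x\<in>S. \<forall>y\<in>S. x \<noteq> y \<longrightarrow> E x y))"

definition min_degree :: "'a set \<Rightarrow> ('a \<Rightarrow> 'a \<Rightarrow> bool) \<Rightarrow> nat" where
  "min_degree V E = Min ((\<lambda>v. card (nbhd V E v)) ` V)"

definition istdf :: "'a set \<Rightarrow> ('a \<Rightarrow> 'a \<Rightarrow> bool) \<Rightarrow> ('a \<Rightarrow> int) \<Rightarrow> bool" where
  "istdf V E f \<longleftrightarrow> (\<forall>v\<in>V. f v \<in> {-1, 1}) \<and> (\<forall>v\<in>V. sum f (nbhd V E v) \<le> 0)"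

definition inv_signed_total_dom :: "'a set \<Rightarrow> ('a \<Rightarrow> 'a \<Rightarrow> bool) \<Rightarrow> int" where
  "inv_signed_total_dom V E = Max {sum f V | f. istdf V E f}"

definition r_partite :: "nat \<Rightarrow> 'a set \<Rightarrow> ('a \<Rightarrow> 'a \<Rightarrow> bool) \<Rightarrow> bool" where
  "r_partite r V E \<longleftrightarrow> (\<exists>P :: 'a \<Rightarrow> nat. (\<forall>v\<in>V. P v < r) \<and> (\<forall>u v. E u v \<longrightarrow> P u \<noteq> P v))"

definition istd_bound :: "nat \<Rightarrow> nat \<Rightarrow> nat \<Rightarrow> real" where
  "istd_bound r \<delta> n =
     (let c = real_of_int \<lceil>real \<delta> / 2\<rceil> in
      real n - real r / (real r - 1) *
        (- c + sqrt (c\<^sup>2 + 4 * ((real r - 1) / real r) * c * real n)))"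

end

theory Submission
  imports Defs "HOL-Library.Nat_Bijection"
begin


definition dd :: "('a \<Rightarrow> 'a \<Rightarrow> bool) \<Rightarrow> 'a set \<Rightarrow> 'a set \<Rightarrow> nat" where
  "dd E X Y = (\<Sum>x\<in>X. card {y\<in>Y. E x y})"

lemma card_filter_sum: "finite Y \<Longrightarrow> card {y\<in>Y. P y} = (\<Sum>y\<in>Y. if P y then 1 else 0)"
  by (simp add: sum.inter_filter[symmetric])

lemma dd_sym:
  assumes "finite X" "finite Y" "\<And>x y. E x y \<Longrightarrow> E y x"
  shows "dd E X Y = dd E Y X"
proof -
  have "dd E X Y = (\<Sum>x\<in>X. \<Sum>y\<in>Y. if E x y then 1 else 0)"
    unfolding dd_def using assms by (simp add: card_filter_sum)
  also have "\<dots> = (\<Sum>y\<in>Y. \<Sum>x\<in>X. if E x y then 1 else 0)" by (rule sum.swap)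
  also have "\<dots> = (\<Sum>y\<in>Y. \<Sum>x\<in>X. if E y x then 1 else 0)"
    using assms(3) by (intro sum.cong refl) (metis)
  also have "\<dots> = dd E Y X"
    unfolding dd_def using assms by (simp add: card_filter_sum)
  finally show ?thesis .
qed

lemma dd_union1:
  assumes "finite X1" "finite X2" "X1 \<inter> X2 = {}"
  shows "dd E (X1 \<union> X2) Y = dd E X1 Y + dd E X2 Y"
  unfolding dd_def using assms by (simp add: sum.union_disjoint)

lemma dd_union2:
  assumes "finite Y1" "finite Y2" "Y1 \<inter> Y2 = {}"
  shows "dd E X (Y1 \<union> Y2) = dd E X Y1 + dd E X Y2"
proof -
  have "\<And>x. card {y\<in>Y1 \<union> Y2. E x y} = card {y\<in>Y1. E x y} + card {y\<in>Y2. E x y}"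
  proof -
    fix x
    have "{y\<in>Y1 \<union> Y2. E x y} = {y\<in>Y1. E x y} \<union> {y\<in>Y2. E x y}" by auto
    thus "card {y\<in>Y1 \<union> Y2. E x y} = card {y\<in>Y1. E x y} + card {y\<in>Y2. E x y}"
      using assms by (simp add: card_Un_disjoint disjoint_iff)
  qed
  thus ?thesis unfolding dd_def by (simp add: sum.distrib)
qed

definition cf :: "nat \<Rightarrow> 'a set \<Rightarrow> ('a \<Rightarrow> 'a \<Rightarrow> bool) \<Rightarrow> bool" where
  "cf p M E \<longleftrightarrow> \<not> (\<exists>S. S \<subseteq> M \<and> card S = p \<and> (\<forall>x\<in>S. \<forall>y\<in>S. x \<noteq> y \<longrightarrow> E x y))"

lemma cf_mono: "cf p M E \<Longrightarrow> N \<subseteq> M \<Longrightarrow> cf p N E"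
  unfolding cf_def by blast

lemma turan:
  assumes sym: "\<And>x y. E x y \<Longrightarrow> E y x" and irr: "\<And>x. \<not> E x x"
  shows "finite M \<Longrightarrow> cf (Suc (Suc k)) M E \<Longrightarrow> Suc k * dd E M M \<le> k * card M ^ 2"
proof (induction k arbitrary: M)
  case 0
  have "\<And>x. x \<in> M \<Longrightarrow> {y\<in>M. E x y} = {}"
  proof (rule ccontr)
    fix x assume x: "x \<in> M" and "{y\<in>M. E x y} \<noteq> {}"
    then obtain y where y: "y \<in> M" "E x y" by auto
    hence "x \<noteq> y" using irr by auto
    hence "card {x,y} = Suc (Suc 0)" by simp
    moreover have "{x,y} \<subseteq> M" using x y by auto
    moreover have "\<forall>a\<in>{x,y}. \<forall>b\<in>{x,y}. a \<noteq> b \<longrightarrow> E a b" using y sym by auto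
    ultimately show False using "0.prems"(2) unfolding cf_def by blast
  qed
  note emp = this
  have "dd E M M = 0" unfolding dd_def
    by (intro sum.neutral ballI, subst emp) simp_all
  thus ?case by simp
next
  case (Suc k)
  show ?case using Suc.prems
  proof (induction "card M" arbitrary: M rule: less_induct)
    case less
    note fin = less.prems(1)
    show ?case
    proof (cases "cf (Suc (Suc k)) M E")
      case True
      have h: "Suc k * dd E M M \<le> k * card M ^ 2" using Suc.IH[OF fin True] .
      have "Suc k * (Suc (Suc k) * dd E M M) = Suc (Suc k) * (Suc k * dd E M M)" by (simp only: mult.left_commute)
      also have "\<dots> \<le> Suc (Suc k) * (k * card M ^ 2)" using h by (rule mult_left_mono) simp
      also have "\<dots> \<le> Suc k * (Suc k * card M ^ 2)"
      proof -
        have "Suc (Suc k) * k \<le> Suc k * Suc k" by simp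
        hence "(Suc (Suc k) * k) * card M ^ 2 \<le> (Suc k * Suc k) * card M ^ 2"
          by (rule mult_right_mono) simp
        thus ?thesis by (metis mult.assoc)
      qed
      finally show ?thesis using mult_le_cancel1[of "Suc k"] by (simp only: mult_le_cancel1)
    next
      case False
      then obtain A where A: "A \<subseteq> M" "card A = Suc (Suc k)"
        "\<forall>x\<in>A. \<forall>y\<in>A. x \<noteq> y \<longrightarrow> E x y" unfolding cf_def by blast
      define B where "B = M - A"
      have finA: "finite A" using A fin finite_subset by blast
      have finB: "finite B" using fin B_def by simp
      have MAB: "M = A \<union> B" using A B_def by auto
      have disj: "A \<inter> B = {}" using B_def by auto
      have cB: "card B = card M - Suc (Suc k)" using A fin B_def by (simp add: card_Diff_subset finA)
      have cM: "card M = card B + Suc (Suc k)" using A fin MAB disj finA finB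
        by (metis card_Un_disjoint add.commute)
      have ltB: "card B < card M" using cM by simp
      have cfB: "cf (Suc (Suc (Suc k))) B E" using cf_mono[OF less.prems(2)] B_def by auto
      have IHB: "Suc (Suc k) * dd E B B \<le> Suc k * card B ^ 2"
        using less.hyps[OF ltB finB cfB] .
      have dAA: "dd E A A = Suc (Suc k) * Suc k"
      proof -
        have "\<And>x. x \<in> A \<Longrightarrow> card {y\<in>A. E x y} = Suc k"
        proof -
          fix x assume x: "x \<in> A"
          have "{y\<in>A. E x y} = A - {x}" using A(3) x irr by auto
          thus "card {y\<in>A. E x y} = Suc k" using x A(2) finA by simp
        qed
        thus ?thesis unfolding dd_def using A(2) by simp
      qed
      have dBA: "dd E B A \<le> card B * Suc k"
      proof -
        have "\<And>v. v \<in> B \<Longrightarrow> card {y\<in>A. E v y} \<le> Suc k"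
        proof (rule ccontr)
          fix v assume v: "v \<in> B" and "\<not> card {y\<in>A. E v y} \<le> Suc k"
          hence "card {y\<in>A. E v y} = card A"
            using A(2) card_mono[OF finA, of "{y\<in>A. E v y}"] by auto
          hence eq: "{y\<in>A. E v y} = A" using finA by (metis (no_types, lifting) card_subset_eq mem_Collect_eq subsetI)
          have vA: "v \<notin> A" using v B_def by auto
          have "card (insert v A) = Suc (Suc (Suc k))" using vA finA A(2) by simp
          moreover have "insert v A \<subseteq> M" using v B_def A by auto
          moreover have "\<forall>x\<in>insert v A. \<forall>y\<in>insert v A. x \<noteq> y \<longrightarrow> E x y"
            using A(3) eq sym by blast
          ultimately show False using less.prems(2) unfolding cf_def by blast
        qed
        hence "dd E B A \<le> (\<Sum>x\<in>B. Suc k)" unfolding dd_def by (intro sum_mono) auto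
        thus ?thesis by simp
      qed
      have dAB: "dd E A B = dd E B A" using dd_sym[OF finA finB] sym by blast
      have dM: "dd E M M = dd E A A + dd E A B + dd E B A + dd E B B"
        unfolding MAB using dd_union1[OF finA finB disj] dd_union2[OF finA finB disj]
          dd_union2[OF finA finB disj, of E B] by simp
      let ?b = "card B"
      have "Suc (Suc k) * dd E M M = Suc (Suc k) * dd E A A + 2 * (Suc (Suc k) * dd E B A)
          + Suc (Suc k) * dd E B B" unfolding dM dAB by (simp add: algebra_simps)
      also have "\<dots> \<le> Suc (Suc k) * (Suc (Suc k) * Suc k) + 2 * (Suc (Suc k) * (?b * Suc k))
          + Suc k * ?b ^ 2"
      proof (intro add_mono)
        show "Suc (Suc k) * dd E A A \<le> Suc (Suc k) * (Suc (Suc k) * Suc k)" using dAA by simp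
        show "2 * (Suc (Suc k) * dd E B A) \<le> 2 * (Suc (Suc k) * (?b * Suc k))"
          using dBA by (intro mult_left_mono) auto
        show "Suc (Suc k) * dd E B B \<le> Suc k * ?b ^ 2" using IHB .
      qed
      also have "\<dots> = Suc k * card M ^ 2" unfolding cM by (simp add: power2_eq_square algebra_simps)
      finally show ?thesis .
    qed
  qed
qed


lemma istdf_finite_ne:
  assumes "finite V"
  shows "finite {sum f V | f. istdf V E f}" "{sum f V | f. istdf V E f} \<noteq> {}"
proof -
  have "{sum f V | f. istdf V E f} \<subseteq> {- int (card V) .. int (card V)}"
  proof
    fix x assume "x \<in> {sum f V | f. istdf V E f}"
    then obtain f where f: "istdf V E f" "x = sum f V" by auto
    have "\<bar>sum f V\<bar> \<le> (\<Sum>v\<in>V. \<bar>f v\<bar>)" by (rule sum_abs)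
    also have "\<dots> = (\<Sum>v\<in>V. 1)" using f(1) unfolding istdf_def by (intro sum.cong) auto
    finally show "x \<in> {- int (card V) .. int (card V)}" using f by auto
  qed
  thus "finite {sum f V | f. istdf V E f}" by (rule finite_subset) simp
  have "istdf V E (\<lambda>_. -1)" unfolding istdf_def by simp
  thus "{sum f V | f. istdf V E f} \<noteq> {}" by blast
qed

lemma main_bound:
  assumes r: "r \<ge> 2" and sg: "simple_graph V E" and ne: "V \<noteq> {}"
    and cfr: "clique_free (r + 1) V E"
  shows "real_of_int (inv_signed_total_dom V E) \<le> istd_bound r (min_degree V E) (card V)"
proof -
  have finV: "finite V" and symE: "\<And>x y. E x y \<Longrightarrow> E y x" and irr: "\<And>x. \<not> E x x"
    and inV: "\<And>x y. E x y \<Longrightarrow> x \<in> V \<and> y \<in> V"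
    using sg unfolding simple_graph_def by auto
  have "inv_signed_total_dom V E \<in> {sum f V | f. istdf V E f}"
    unfolding inv_signed_total_dom_def using istdf_finite_ne[OF finV] by (rule Max_in)
  then obtain f where f: "istdf V E f" and inv: "inv_signed_total_dom V E = sum f V" by auto
  have fv: "\<And>v. v \<in> V \<Longrightarrow> f v = 1 \<or> f v = -1" using f unfolding istdf_def by auto
  define P where "P = {v\<in>V. f v = 1}"
  define M where "M = {v\<in>V. f v = -1}"
  have finP: "finite P" and finM: "finite M" using finV P_def M_def by auto
  have VPM: "V = P \<union> M" and dPM: "P \<inter> M = {}" using fv P_def M_def by auto
  have sumV: "sum f V = int (card P) - int (card M)"
  proof -
    have "sum f V = sum f P + sum f M" unfolding VPM using finP finM dPM by (rule sum.union_disjoint)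
    also have "sum f P = int (card P)" unfolding P_def by simp
    also have "sum f M = - int (card M)" unfolding M_def by simp
    finally show ?thesis by simp
  qed
  have cV: "card V = card P + card M" unfolding VPM using finP finM dPM by (rule card_Un_disjoint)
  define \<delta> where "\<delta> = min_degree V E"
  define c where "c = \<lceil>real \<delta> / 2\<rceil>"
  have nb: "\<And>v. v \<in> V \<Longrightarrow> c \<le> int (card {y\<in>M. E v y}) \<and> card {y\<in>P. E v y} \<le> card {y\<in>M. E v y}"
  proof -
    fix v assume v: "v \<in> V"
    have N: "nbhd V E v = {y\<in>P. E v y} \<union> {y\<in>M. E v y}" unfolding nbhd_def VPM by auto
    have d: "{y\<in>P. E v y} \<inter> {y\<in>M. E v y} = {}" using dPM by auto
    have fP: "finite {y\<in>P. E v y}" "finite {y\<in>M. E v y}" using finP finM by auto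
    have "sum f (nbhd V E v) = sum f {y\<in>P. E v y} + sum f {y\<in>M. E v y}"
      unfolding N using fP d by (rule sum.union_disjoint)
    also have "sum f {y\<in>P. E v y} = int (card {y\<in>P. E v y})" unfolding P_def by simp
    also have "sum f {y\<in>M. E v y} = - int (card {y\<in>M. E v y})" unfolding M_def by simp
    finally have eqs: "sum f (nbhd V E v) = int (card {y\<in>P. E v y}) - int (card {y\<in>M. E v y})" by simp
    have "sum f (nbhd V E v) \<le> 0" using f v unfolding istdf_def by blast
    hence "int (card {y\<in>P. E v y}) - int (card {y\<in>M. E v y}) \<le> 0" using eqs by simp
    hence le: "card {y\<in>P. E v y} \<le> card {y\<in>M. E v y}" by simp
    have cN: "card (nbhd V E v) = card {y\<in>P. E v y} + card {y\<in>M. E v y}"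
      unfolding N using fP d by (rule card_Un_disjoint)
    have "\<delta> \<le> card (nbhd V E v)" unfolding \<delta>_def min_degree_def
      using finV v by (intro Min_le) auto
    hence "real \<delta> / 2 \<le> real (card {y\<in>M. E v y})" using cN le by simp
    hence "c \<le> int (card {y\<in>M. E v y})" unfolding c_def by (simp add: ceiling_le_iff)
    thus "c \<le> int (card {y\<in>M. E v y}) \<and> card {y\<in>P. E v y} \<le> card {y\<in>M. E v y}" using le by simp
  qed
  have c0: "c \<ge> 0" unfolding c_def by simp
  have s1: "c * int (card P) \<le> int (dd E P M)"
  proof -
    have "c * int (card P) = (\<Sum>v\<in>P. c)" by simp
    also have "\<dots> \<le> (\<Sum>v\<in>P. int (card {y\<in>M. E v y}))" using nb VPM by (intro sum_mono) auto
    also have "\<dots> = int (dd E P M)" unfolding dd_def by simp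
    finally show ?thesis .
  qed
  have s2: "dd E P M = dd E M P" using dd_sym[OF finP finM] symE by blast
  have s3: "dd E M P \<le> dd E M M" unfolding dd_def using nb VPM by (intro sum_mono) auto
  obtain k where k: "r = Suc k" "k \<ge> 1" using r by (metis Suc_le_D Suc_le_mono one_add_one plus_1_eq_Suc)
  have cfM: "cf (Suc (Suc k)) M E" using cfr k unfolding clique_free_def cf_def M_def by auto
  have s4: "Suc k * dd E M M \<le> k * card M ^ 2" using turan[OF symE irr finM cfM] by blast
  define n where "n = real (card V)"
  define m where "m = real (card M)"
  define cr where "cr = real_of_int c"
  define q where "q = (real r - 1) / real r"
  have rr: "real r \<ge> 2" using r by simp
  have q0: "q > 0" unfolding q_def using rr by simp
  have cr0: "cr \<ge> 0" unfolding cr_def using c0 by simp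
  have m0: "m \<ge> 0" unfolding m_def by simp
  have key: "real r * (cr * (n - m)) \<le> (real r - 1) * m ^ 2"
  proof -
    have a: "cr * (n - m) \<le> real (dd E M M)"
    proof -
      have "int (dd E P M) \<le> int (dd E M M)" using s2 s3 by simp
      hence "c * int (card P) \<le> int (dd E M M)" using s1 by linarith
      hence "real_of_int (c * int (card P)) \<le> real_of_int (int (dd E M M))" by (simp only: of_int_le_iff)
      moreover have "n - m = real (card P)" unfolding n_def m_def cV by simp
      ultimately show ?thesis unfolding cr_def by simp
    qed
    have b: "real r * real (dd E M M) \<le> (real r - 1) * m ^ 2"
    proof -
      have "real (Suc k * dd E M M) \<le> real (k * card M ^ 2)" using s4 by (simp only: of_nat_le_iff)
      thus ?thesis unfolding m_def using k by (simp add: algebra_simps)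
    qed
    have "real r * (cr * (n - m)) \<le> real r * real (dd E M M)" using a rr by simp
    thus ?thesis using b by linarith
  qed
  have key2: "cr * (n - m) \<le> q * m ^ 2" using key rr unfolding q_def by (simp add: field_simps)
  have sq: "sqrt (cr^2 + 4 * q * cr * n) \<le> 2 * q * m + cr"
  proof -
    have "cr^2 + 4 * q * cr * n \<le> (2 * q * m + cr)^2"
    proof -
      have "q * (cr * (n - m)) \<le> q * (q * m^2)" using key2 q0 by simp
      thus ?thesis by (simp add: power2_eq_square algebra_simps)
    qed
    hence "sqrt (cr^2 + 4 * q * cr * n) \<le> sqrt ((2 * q * m + cr)^2)" by (rule real_sqrt_le_mono)
    also have "\<dots> = 2 * q * m + cr" using q0 m0 cr0 by simp
    finally show ?thesis .
  qed
  have rq: "real r / (real r - 1) * q = 1" unfolding q_def using rr by simp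
  have "real r / (real r - 1) * (- cr + sqrt (cr^2 + 4 * q * cr * n)) \<le> real r / (real r - 1) * (2 * q * m)"
    using sq rr by (intro mult_left_mono) auto
  also have "\<dots> = 2 * m * (real r / (real r - 1) * q)" by (simp only: mult_ac)
  also have "\<dots> = 2 * m" by (simp only: rq mult_1_right)
  finally have fin: "real r / (real r - 1) * (- cr + sqrt (cr^2 + 4 * q * cr * n)) \<le> 2 * m" .
  have "istd_bound r (min_degree V E) (card V) = n - real r / (real r - 1) * (- cr + sqrt (cr^2 + 4 * q * cr * n))"
    unfolding istd_bound_def Let_def cr_def c_def \<delta>_def n_def q_def by simp
  moreover have "real_of_int (inv_signed_total_dom V E) = n - 2 * m"
    unfolding inv sumV n_def m_def cV by simp
  ultimately show ?thesis using fin by linarith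
qed



definition Tset :: "nat \<Rightarrow> (nat \<times> nat \<times> nat) set" where
  "Tset s = {..<s} \<times> {..<s-1} \<times> {..s-1}"

fun adjc :: "nat \<Rightarrow> nat \<times> nat \<times> nat \<Rightarrow> nat \<times> nat \<times> nat \<Rightarrow> bool" where
  "adjc s (a,i,j) (b,i',j') = (a \<noteq> b \<and> ((i = i' \<and> (j = j' \<or> j = s-1 \<or> j' = s-1)) \<or> (j = s-1 \<and> j' = s-1)))"

definition enc :: "nat \<times> nat \<times> nat \<Rightarrow> nat" where
  "enc t = prod_encode (fst t, prod_encode (snd t))"

lemma inj_enc: "inj enc"
  unfolding enc_def inj_def by (auto simp: prod_encode_eq prod_eq_iff)

definition Wg :: "nat \<Rightarrow> nat set" where "Wg s = enc ` Tset s"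

definition Fg :: "nat \<Rightarrow> nat \<Rightarrow> nat \<Rightarrow> bool" where
  "Fg s x y = (\<exists>t\<in>Tset s. \<exists>t'\<in>Tset s. x = enc t \<and> y = enc t' \<and> adjc s t t')"

lemma Fg_enc: "t \<in> Tset s \<Longrightarrow> t' \<in> Tset s \<Longrightarrow> Fg s (enc t) (enc t') = adjc s t t'"
  unfolding Fg_def using inj_enc by (auto simp: inj_eq)

lemma adjc_sym: "adjc s t t' \<Longrightarrow> adjc s t' t"
  by (cases t; cases t') auto

lemma adjc_irr: "\<not> adjc s t t"
  by (cases t) auto

lemma finT: "finite (Tset s)" unfolding Tset_def by simp

lemma nbhd_enc: "t \<in> Tset s \<Longrightarrow> nbhd (Wg s) (Fg s) (enc t) = enc ` {t'\<in>Tset s. adjc s t t'}"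
  unfolding nbhd_def Wg_def by (auto simp del: adjc.simps simp: Fg_enc)

lemma card_nbhd_enc: "t \<in> Tset s \<Longrightarrow> card (nbhd (Wg s) (Fg s) (enc t)) = card {t'\<in>Tset s. adjc s t t'}"
proof -
  assume t: "t \<in> Tset s"
  have "card (enc ` {t'\<in>Tset s. adjc s t t'}) = card {t'\<in>Tset s. adjc s t t'}"
    by (rule card_image) (rule inj_on_subset[OF inj_enc], simp)
  thus ?thesis by (simp only: nbhd_enc[OF t])
qed

lemma sg: "simple_graph (Wg s) (Fg s)"
  unfolding simple_graph_def Wg_def
  using finT adjc_sym adjc_irr by (auto simp: Fg_def inj_enc inj_eq)

lemma cardW: "s \<ge> 1 \<Longrightarrow> card (Wg s) = s\<^sup>2 * (s - 1)"
proof -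
  assume s: "s \<ge> 1"
  have "card (Wg s) = card (Tset s)" unfolding Wg_def
    by (rule card_image) (rule inj_on_subset[OF inj_enc], simp)
  also have "\<dots> = s * (s-1) * s" unfolding Tset_def using s by (simp add: card_cartesian_product)
  finally show ?thesis by (simp add: power2_eq_square)
qed

lemma nb_P:
  assumes "a < s" "i < s - 1" "j < s - 1"
  shows "{t'\<in>Tset s. adjc s (a,i,j) t'} = (({..<s} - {a}) \<times> {i} \<times> {j}) \<union> (({..<s} - {a}) \<times> {i} \<times> {s-1})"
  using assms unfolding Tset_def by auto

lemma nb_M:
  assumes "a < s" "i < s - 1"
  shows "{t'\<in>Tset s. adjc s (a,i,s-1) t'} = (({..<s} - {a}) \<times> {i} \<times> {..<s-1}) \<union> (({..<s} - {a}) \<times> {..<s-1} \<times> {s-1})"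
  using assms unfolding Tset_def by auto


definition TM :: "nat \<Rightarrow> (nat \<times> nat \<times> nat) set" where "TM s = {..<s} \<times> {..<s-1} \<times> {s-1}"
definition TP :: "nat \<Rightarrow> (nat \<times> nat \<times> nat) set" where "TP s = {..<s} \<times> {..<s-1} \<times> {..<s-1}"

definition f0 :: "nat \<Rightarrow> nat \<Rightarrow> int" where
  "f0 s x = (if x \<in> enc ` TM s then -1 else 1)"

lemma f0_enc: "f0 s (enc t) = (if t \<in> TM s then -1 else 1)"
  unfolding f0_def by (simp only: inj_image_mem_iff[OF inj_enc])

lemma sum_f0_img: "finite X \<Longrightarrow> sum (f0 s) (enc ` X) = (\<Sum>t\<in>X. if t \<in> TM s then -1 else 1)"
proof -
  have "sum (f0 s) (enc ` X) = sum (f0 s \<circ> enc) X"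
    by (rule sum.reindex) (rule inj_on_subset[OF inj_enc], simp)
  also have "\<dots> = (\<Sum>t\<in>X. if t \<in> TM s then -1 else 1)"
    by (rule sum.cong) (simp_all only: o_apply f0_enc)
  finally show ?thesis .
qed

lemma sum_plus: "finite X \<Longrightarrow> X \<inter> TM s = {} \<Longrightarrow> (\<Sum>t\<in>X. if t \<in> TM s then -1 else 1 :: int) = int (card X)"
  by (subst sum.cong[where h = "\<lambda>_. 1"]) auto

lemma sum_minus: "X \<subseteq> TM s \<Longrightarrow> (\<Sum>t\<in>X. if t \<in> TM s then -1 else 1 :: int) = - int (card X)"
  by (subst sum.cong[where h = "\<lambda>_. -1"]) auto

lemma cardB: "a < s \<Longrightarrow> card ({..<s} - {a}) = s - 1"
  by simp

lemma nb_facts: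
  assumes s: "s \<ge> 2" and t: "t \<in> Tset s"
  shows "sum (f0 s) (nbhd (Wg s) (Fg s) (enc t)) = 0 \<and> card (nbhd (Wg s) (Fg s) (enc t)) \<ge> 2 * (s - 1)"
proof -
  obtain a i j where tt: "t = (a,i,j)" by (cases t) auto
  have a: "a < s" and i: "i < s - 1" and j: "j \<le> s - 1" using t tt unfolding Tset_def by auto
  let ?B = "{..<s} - {a}"
  have fB: "finite ?B" by simp
  show ?thesis
  proof (cases "j = s - 1")
    case False
    hence j': "j < s - 1" using j by simp
    let ?X1 = "?B \<times> {i} \<times> {j}" and ?X2 = "?B \<times> {i} \<times> {s-1}"
    have N: "nbhd (Wg s) (Fg s) (enc t) = enc ` (?X1 \<union> ?X2)"
      using nbhd_enc[OF t] nb_P[OF a i j'] tt by simp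
    have d: "?X1 \<inter> ?X2 = {}" using j' by auto
    have c1: "card ?X1 = s - 1" "card ?X2 = s - 1" using a by (simp_all add: card_cartesian_product)
    have "sum (f0 s) (nbhd (Wg s) (Fg s) (enc t)) = (\<Sum>t\<in>?X1 \<union> ?X2. if t \<in> TM s then -1 else 1)"
      unfolding N by (rule sum_f0_img) simp
    also have "\<dots> = (\<Sum>t\<in>?X1. if t \<in> TM s then -1 else 1) + (\<Sum>t\<in>?X2. if t \<in> TM s then -1 else 1)"
      by (rule sum.union_disjoint) (use d in auto)
    also have "(\<Sum>t\<in>?X1. if t \<in> TM s then -1 else 1) = int (card ?X1)"
      by (rule sum_plus) (use j' in \<open>auto simp: TM_def\<close>)
    also have "(\<Sum>t\<in>?X2. if t \<in> TM s then -1 else 1) = - int (card ?X2)"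
      by (rule sum_minus) (use a i in \<open>auto simp: TM_def\<close>)
    finally have S: "sum (f0 s) (nbhd (Wg s) (Fg s) (enc t)) = 0" using c1 by simp
    have "card (nbhd (Wg s) (Fg s) (enc t)) = card (?X1 \<union> ?X2)"
      unfolding card_nbhd_enc[OF t] using nb_P[OF a i j'] tt by simp
    also have "\<dots> = card ?X1 + card ?X2" by (rule card_Un_disjoint) (use d in auto)
    also have "\<dots> = 2 * (s - 1)" unfolding c1 by simp
    finally have C: "card (nbhd (Wg s) (Fg s) (enc t)) = 2 * (s - 1)" .
    show ?thesis by (rule conjI[OF S]) (simp only: C le_refl)
  next
    case True
    let ?X1 = "?B \<times> {i} \<times> {..<s-1}" and ?X2 = "?B \<times> {..<s-1} \<times> {s-1}"
    have N: "nbhd (Wg s) (Fg s) (enc t) = enc ` (?X1 \<union> ?X2)"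
      using nbhd_enc[OF t] nb_M[OF a i] tt True by simp
    have d: "?X1 \<inter> ?X2 = {}" by auto
    have c1: "card ?X1 = (s - 1) * (s - 1)" "card ?X2 = (s - 1) * (s - 1)"
      using a by (simp_all add: card_cartesian_product)
    have "sum (f0 s) (nbhd (Wg s) (Fg s) (enc t)) = (\<Sum>t\<in>?X1 \<union> ?X2. if t \<in> TM s then -1 else 1)"
      unfolding N by (rule sum_f0_img) simp
    also have "\<dots> = (\<Sum>t\<in>?X1. if t \<in> TM s then -1 else 1) + (\<Sum>t\<in>?X2. if t \<in> TM s then -1 else 1)"
      by (rule sum.union_disjoint) (use d in auto)
    also have "(\<Sum>t\<in>?X1. if t \<in> TM s then -1 else 1) = int (card ?X1)"
      by (rule sum_plus) (auto simp: TM_def)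
    also have "(\<Sum>t\<in>?X2. if t \<in> TM s then -1 else 1) = - int (card ?X2)"
      by (rule sum_minus) (auto simp: TM_def)
    finally have S: "sum (f0 s) (nbhd (Wg s) (Fg s) (enc t)) = 0" using c1 by simp
    have "card (nbhd (Wg s) (Fg s) (enc t)) = card (?X1 \<union> ?X2)"
      unfolding card_nbhd_enc[OF t] using nb_M[OF a i] tt True by simp
    also have "\<dots> = card ?X1 + card ?X2" by (rule card_Un_disjoint) (use d in auto)
    also have "\<dots> = 2 * ((s - 1) * (s - 1))" unfolding c1 by simp
    finally have C: "card (nbhd (Wg s) (Fg s) (enc t)) = 2 * ((s - 1) * (s - 1))" .
    have "2 * (s - 1) \<le> 2 * ((s - 1) * (s - 1))" using s by simp
    thus ?thesis by (intro conjI[OF S]) (simp only: C)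
  qed
qed

lemma istdf_f0: assumes s: "s \<ge> 2" shows "istdf (Wg s) (Fg s) (f0 s)"
  unfolding istdf_def
proof (intro conjI ballI)
  fix v assume "v \<in> Wg s"
  have aux: "\<And>P. (if P then (-1::int) else 1) \<in> {-1, 1}" by simp
  show "f0 s v \<in> {-1, 1}" unfolding f0_def by (rule aux)
  from \<open>v \<in> Wg s\<close> obtain t where t: "t \<in> Tset s" "v = enc t" unfolding Wg_def by blast
  have "sum (f0 s) (nbhd (Wg s) (Fg s) (enc t)) = 0" using nb_facts[OF s t(1)] by (rule conjunct1)
  thus "sum (f0 s) (nbhd (Wg s) (Fg s) v) \<le> 0" unfolding t(2) by (rule eq_refl)
qed



lemma mindeg: assumes s: "s \<ge> 2" shows "min_degree (Wg s) (Fg s) = 2 * (s - 1)"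
proof -
  have t0: "(0,0,0) \<in> Tset s" using s unfolding Tset_def by auto
  have "card (nbhd (Wg s) (Fg s) (enc (0,0,0))) = 2 * (s - 1)"
  proof -
    have "card (nbhd (Wg s) (Fg s) (enc (0,0,0))) = card {t'\<in>Tset s. adjc s (0,0,0) t'}"
      by (rule card_nbhd_enc[OF t0])
    also have "{t'\<in>Tset s. adjc s (0,0,0) t'} = (({..<s} - {0}) \<times> {0} \<times> {0}) \<union> (({..<s} - {0}) \<times> {0} \<times> {s-1})"
      using s by (intro nb_P) auto
    also have "card \<dots> = 2 * (s - 1)" using s by (subst card_Un_disjoint) (auto simp: card_cartesian_product)
    finally show ?thesis .
  qed
  show ?thesis unfolding min_degree_def
  proof (rule Min_eqI)
    show "finite ((\<lambda>v. card (nbhd (Wg s) (Fg s) v)) ` Wg s)" using finT unfolding Wg_def by simp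
    show "\<And>y. y \<in> (\<lambda>v. card (nbhd (Wg s) (Fg s) v)) ` Wg s \<Longrightarrow> 2 * (s - 1) \<le> y"
      using nb_facts[OF s] unfolding Wg_def by auto
    show "2 * (s - 1) \<in> (\<lambda>v. card (nbhd (Wg s) (Fg s) v)) ` Wg s"
      using t0 \<open>card _ = _\<close> unfolding Wg_def by (metis image_eqI)
  qed
qed

lemma weight: assumes s: "s \<ge> 2" shows "sum (f0 s) (Wg s) = int (s * (s-1) * (s-1)) - int (s * (s-1))"
proof -
  have T: "Tset s = TP s \<union> TM s" unfolding Tset_def TP_def TM_def using s by auto
  have d: "TP s \<inter> TM s = {}" unfolding TP_def TM_def by auto
  have "sum (f0 s) (Wg s) = (\<Sum>t\<in>TP s \<union> TM s. if t \<in> TM s then -1 else 1)"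
    unfolding Wg_def T[symmetric] by (rule sum_f0_img[OF finT])
  also have "\<dots> = (\<Sum>t\<in>TP s. if t \<in> TM s then -1 else 1) + (\<Sum>t\<in>TM s. if t \<in> TM s then -1 else 1)"
    by (rule sum.union_disjoint) (use d in \<open>auto simp: TP_def TM_def\<close>)
  also have "(\<Sum>t\<in>TP s. if t \<in> TM s then -1 else 1) = int (card (TP s))"
    by (rule sum_plus) (use d in \<open>auto simp: TP_def\<close>)
  also have "(\<Sum>t\<in>TM s. if t \<in> TM s then -1 else 1) = - int (card (TM s))"
    by (rule sum_minus) simp
  finally show ?thesis unfolding TP_def TM_def by (simp add: card_cartesian_product)
qed


lemma rp: "s \<ge> 2 \<Longrightarrow> r_partite s (Wg s) (Fg s)"
  unfolding r_partite_def
proof (intro exI[of _ "\<lambda>x. fst (prod_decode x)"] conjI allI impI ballI)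
  fix v assume "v \<in> Wg s"
  then obtain t where t: "t \<in> Tset s" "v = enc t" unfolding Wg_def by blast
  thus "fst (prod_decode v) < s" unfolding enc_def Tset_def by auto
next
  fix u v assume "Fg s u v"
  then obtain t t' where tt: "t \<in> Tset s" "t' \<in> Tset s" "u = enc t" "v = enc t'" "adjc s t t'"
    unfolding Fg_def by blast
  have "fst t \<noteq> fst t'" using tt(5) by (cases t; cases t') auto
  thus "fst (prod_decode u) \<noteq> fst (prod_decode v)" using tt unfolding enc_def by simp
qed

lemma rp_cf:
  assumes "r_partite s W F" shows "clique_free (s + 1) W F"
proof -
  obtain P where P: "\<forall>v\<in>W. P v < s" "\<forall>u v. F u v \<longrightarrow> P u \<noteq> P v"
    using assms unfolding r_partite_def by blast
  show ?thesis unfolding clique_free_def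
  proof
    assume "\<exists>S. S \<subseteq> W \<and> card S = s + 1 \<and> (\<forall>x\<in>S. \<forall>y\<in>S. x \<noteq> y \<longrightarrow> F x y)"
    then obtain S where S: "S \<subseteq> W" "card S = s + 1" "\<forall>x\<in>S. \<forall>y\<in>S. x \<noteq> y \<longrightarrow> F x y" by blast
    have "inj_on P S" using S(3) P(2) unfolding inj_on_def by blast
    hence "card (P ` S) = card S" by (rule card_image)
    moreover have "P ` S \<subseteq> {..<s}" using S(1) P(1) by auto
    hence "card (P ` S) \<le> s" using card_mono[of "{..<s}" "P ` S"] by simp
    ultimately show False using S(2) by simp
  qed
qed

lemma symp_Fg: "symp (Fg s)"
  unfolding symp_def Fg_def using adjc_sym by blast

lemma Fg_step: "t \<in> Tset s \<Longrightarrow> t' \<in> Tset s \<Longrightarrow> adjc s t t' \<Longrightarrow> Fg s (enc t) (enc t')"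
  unfolding Fg_def by blast

lemma reach_hub:
  assumes s: "s \<ge> 2" and t: "t \<in> Tset s"
  shows "(Fg s)\<^sup>*\<^sup>* (enc t) (enc (0,0,s-1))"
proof -
  obtain a i j where tt: "t = (a,i,j)" by (cases t) auto
  have i: "i < s - 1" using t tt unfolding Tset_def by auto
  have h: "(0,0,s-1) \<in> Tset s" and m2: "(1,0,s-1) \<in> Tset s" using s unfolding Tset_def by auto
  have h2: "Fg s (enc (1,0,s-1)) (enc (0,0,s-1))" by (rule Fg_step[OF m2 h]) simp
  show ?thesis
  proof (cases "a = 0")
    case True
    have m1: "(1,i,s-1) \<in> Tset s" using s i unfolding Tset_def by auto
    have "Fg s (enc t) (enc (1,i,s-1))" by (rule Fg_step[OF t m1]) (simp add: tt True)
    moreover have "Fg s (enc (1,i,s-1)) (enc (0,0,s-1))" by (rule Fg_step[OF m1 h]) simp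
    ultimately show ?thesis by (meson converse_rtranclp_into_rtranclp rtranclp.rtrancl_refl)
  next
    case False
    have m1: "(0,i,s-1) \<in> Tset s" using s i unfolding Tset_def by auto
    have "Fg s (enc t) (enc (0,i,s-1))" by (rule Fg_step[OF t m1]) (simp add: tt False)
    moreover have "Fg s (enc (0,i,s-1)) (enc (1,0,s-1))" by (rule Fg_step[OF m1 m2]) simp
    ultimately show ?thesis using h2 by (meson converse_rtranclp_into_rtranclp rtranclp.rtrancl_refl)
  qed
qed

lemma conn: assumes s: "s \<ge> 2" shows "connected_graph (Wg s) (Fg s)"
  unfolding connected_graph_def
proof (intro conjI ballI)
  have "(0,0,0) \<in> Tset s" using s unfolding Tset_def by auto
  thus "Wg s \<noteq> {}" unfolding Wg_def by blast
  fix u v assume "u \<in> Wg s" "v \<in> Wg s"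
  then obtain t t' where t: "t \<in> Tset s" "u = enc t" and t': "t' \<in> Tset s" "v = enc t'"
    unfolding Wg_def by blast
  have "(Fg s)\<^sup>*\<^sup>* (enc t') (enc (0,0,s-1))" by (rule reach_hub[OF s t'(1)])
  hence "(Fg s)\<^sup>*\<^sup>* (enc (0,0,s-1)) (enc t')" by (rule sympD[OF symp_rtranclp[OF symp_Fg]])
  with reach_hub[OF s t(1)] show "(Fg s)\<^sup>*\<^sup>* u v" using t t' by (metis rtranclp_trans)
qed

lemma bound_val:
  assumes s: "s \<ge> 2"
  shows "istd_bound s (2 * (s - 1)) (s\<^sup>2 * (s - 1)) = real (s * (s-1) * (s-1)) - real (s * (s-1))"
proof -
  define x where "x = real s"
  have x2: "x \<ge> 2" using s unfolding x_def by simp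
  have rs1: "real (s - 1) = x - 1" using s unfolding x_def by (simp add: of_nat_diff)
  have c: "real_of_int \<lceil>real (2 * (s - 1)) / 2\<rceil> = x - 1"
  proof -
    have "real (2 * (s - 1)) / 2 = real (s - 1)" by simp
    hence "\<lceil>real (2 * (s - 1)) / 2\<rceil> = int (s - 1)" by (simp only: ceiling_of_nat)
    hence "real_of_int \<lceil>real (2 * (s - 1)) / 2\<rceil> = real (s - 1)" by (simp only: of_int_of_nat_eq)
    thus ?thesis using rs1 by (simp only:)
  qed
  have arg: "(x - 1)\<^sup>2 + 4 * ((x - 1) / x) * (x - 1) * real (s\<^sup>2 * (s - 1)) = ((x - 1) * (2 * x - 1))\<^sup>2"
    using x2 rs1 unfolding x_def[symmetric] by (simp add: x_def[symmetric] field_simps power2_eq_square)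
  have sq: "sqrt ((x - 1)\<^sup>2 + 4 * ((x - 1) / x) * (x - 1) * real (s\<^sup>2 * (s - 1))) = (x - 1) * (2 * x - 1)"
    unfolding arg using x2 by simp
  have "istd_bound s (2 * (s - 1)) (s\<^sup>2 * (s - 1)) =
     real (s\<^sup>2 * (s - 1)) - x / (x - 1) * (- (x - 1) + (x - 1) * (2 * x - 1))"
    unfolding istd_bound_def Let_def c[unfolded x_def] sq[unfolded x_def] x_def by (simp only:)
  also have "\<dots> = real (s * (s-1) * (s-1)) - real (s * (s-1))"
    using x2 rs1 unfolding x_def[symmetric] by (simp add: x_def[symmetric] field_simps power2_eq_square)
  finally show ?thesis .
qed


theorem theorem2p4:
  fixes V :: "'a set" and E :: "'a \<Rightarrow> 'a \<Rightarrow> bool" and r :: nat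
  assumes "r \<ge> 2"
    and "simple_graph V E"
    and "connected_graph V E"
    and "clique_free (r + 1) V E"
  shows "real_of_int (inv_signed_total_dom V E) \<le> istd_bound r (min_degree V E) (card V)
    \<and> (\<forall>s::nat. s \<ge> 2 \<longrightarrow> (\<exists>(W :: nat set) F. simple_graph W F \<and> connected_graph W F
          \<and> clique_free (s + 1) W F \<and> r_partite s W F \<and> card W = s\<^sup>2 * (s - 1)
          \<and> real_of_int (inv_signed_total_dom W F) = istd_bound s (min_degree W F) (card W)))"
proof (intro conjI allI impI)
  show "real_of_int (inv_signed_total_dom V E) \<le> istd_bound r (min_degree V E) (card V)"
    using main_bound assms unfolding connected_graph_def by blast
next
  fix s :: nat assume s: "s \<ge> 2"
  have cfW: "clique_free (s + 1) (Wg s) (Fg s)" by (rule rp_cf[OF rp[OF s]])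
  have neW: "Wg s \<noteq> {}" using conn[OF s] unfolding connected_graph_def by blast
  have finW: "finite (Wg s)" using sg unfolding simple_graph_def by blast
  have le: "real_of_int (inv_signed_total_dom (Wg s) (Fg s)) \<le> istd_bound s (min_degree (Wg s) (Fg s)) (card (Wg s))"
    by (rule main_bound[OF s sg neW cfW])
  have val: "istd_bound s (min_degree (Wg s) (Fg s)) (card (Wg s)) = real (s * (s-1) * (s-1)) - real (s * (s-1))"
    using mindeg[OF s] cardW[of s] bound_val[OF s] s by simp
  have ge: "sum (f0 s) (Wg s) \<le> inv_signed_total_dom (Wg s) (Fg s)"
    unfolding inv_signed_total_dom_def
    by (rule Max_ge[OF istdf_finite_ne(1)[OF finW]]) (use istdf_f0[OF s] in blast)
  have w: "real_of_int (sum (f0 s) (Wg s)) = real (s * (s-1) * (s-1)) - real (s * (s-1))"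
    unfolding weight[OF s] by simp
  have eq: "real_of_int (inv_signed_total_dom (Wg s) (Fg s)) = istd_bound s (min_degree (Wg s) (Fg s)) (card (Wg s))"
  proof (rule antisym[OF le])
    have "real_of_int (sum (f0 s) (Wg s)) \<le> real_of_int (inv_signed_total_dom (Wg s) (Fg s))"
      using ge by (simp only: of_int_le_iff)
    thus "istd_bound s (min_degree (Wg s) (Fg s)) (card (Wg s)) \<le> real_of_int (inv_signed_total_dom (Wg s) (Fg s))"
      using val w by linarith
  qed
  show "\<exists>(W :: nat set) F. simple_graph W F \<and> connected_graph W F
          \<and> clique_free (s + 1) W F \<and> r_partite s W F \<and> card W = s\<^sup>2 * (s - 1)
          \<and> real_of_int (inv_signed_total_dom W F) = istd_bound s (min_degree W F) (card W)"
    using sg conn[OF s] cfW rp[OF s] cardW[of s] s eq by (intro exI[of _ "Wg s"] exI[of _ "Fg s"]) auto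
qed

end
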